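(* Let $c_1>0$, $c_3>0$, $r_2>0$, $r_4>0$, $\tau>0$, and put \[ a_1=2\pi c_3\frac{2c_1}{c_1+c_3},\qquad a_2=2\pi c_3\frac{c_1-c_3}{c_1+c_3}. \] Define \[ A=\begin{pmatrix}-a_1r_2&0\\0&-(a_1-a_2)r_4\end{pmatrix},\quad B=\begin{pmatrix}0&-a_1r_4\\-a_1r_2&0\end{pmatrix},\quad C=\begin{pmatrix}0&0\\0&-a_2r_4\end{pmatrix}, \] and $\Delta(s)=sI-A-Be^{-\tau s}-Ce^{-2\tau s}$ for $s\in\mathbb{C}$, with $I$ the $2\times2$ identity. Let $\sigma=\{\lambda\in\mathbb{C}:\det\Delta(\lambda)=0\}$. Then (a) $0\in\sigma$ and $\lambda=0$ is a simple root of $\det\Delta(\lambda)=0$; (b) every $\lambda\in\sigma\setminus\{0\}$ satisfies $\Re(\lambda)<0$.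
   Context: In the physical model $c_i=\cos\theta_i/n_i$ with refractive indices $n_i>0$ and angles $\theta_i\in[0,\pi/2)$ related by Snell's law $n_1\sin\theta_1=n_3\sin\theta_3$; $\Delta(s)$ is the characteristic matrix of the delay differential system $\dot x(t)=Ax(t)+Bx(t-\tau)+Cx(t-2\tau)+h(t)$ in $\mathbb{R}^2$. Note $a_1-a_2=2\pi c_3$. *)

theory Defs
  imports "HOL-Analysis.Analysis"
begin

definition coef_a1 :: "real \<Rightarrow> real \<Rightarrow> real" where
  "coef_a1 c1 c3 = 2 * pi * c3 * (2 * c1 / (c1 + c3))"

definition coef_a2 :: "real \<Rightarrow> real \<Rightarrow> real" where
  "coef_a2 c1 c3 = 2 * pi * c3 * ((c1 - c3) / (c1 + c3))"

definition matA :: "real \<Rightarrow> real \<Rightarrow> real \<Rightarrow> real \<Rightarrow> real^2^2" where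
  "matA c1 c3 r2 r4 = (\<chi> i j.
     if i = 1 \<and> j = 1 then - coef_a1 c1 c3 * r2
     else if i = 2 \<and> j = 2 then - (coef_a1 c1 c3 - coef_a2 c1 c3) * r4
     else 0)"

definition matB :: "real \<Rightarrow> real \<Rightarrow> real \<Rightarrow> real \<Rightarrow> real^2^2" where
  "matB c1 c3 r2 r4 = (\<chi> i j.
     if i = 1 \<and> j = 2 then - coef_a1 c1 c3 * r4
     else if i = 2 \<and> j = 1 then - coef_a1 c1 c3 * r2
     else 0)"

definition matC :: "real \<Rightarrow> real \<Rightarrow> real \<Rightarrow> real \<Rightarrow> real^2^2" where
  "matC c1 c3 r2 r4 = (\<chi> i j.
     if i = 2 \<and> j = 2 then - coef_a2 c1 c3 * r4 else 0)"

definition charmat :: "real \<Rightarrow> real \<Rightarrow> real \<Rightarrow> real \<Rightarrow> real \<Rightarrow> complex \<Rightarrow> complex^2^2" where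
  "charmat c1 c3 r2 r4 \<tau> s = (\<chi> i j.
     s * (mat 1 :: complex^2^2) $ i $ j
     - complex_of_real (matA c1 c3 r2 r4 $ i $ j)
     - complex_of_real (matB c1 c3 r2 r4 $ i $ j) * exp (- complex_of_real \<tau> * s)
     - complex_of_real (matC c1 c3 r2 r4 $ i $ j) * exp (- 2 * complex_of_real \<tau> * s))"

definition char_spectrum :: "real \<Rightarrow> real \<Rightarrow> real \<Rightarrow> real \<Rightarrow> real \<Rightarrow> complex set" where
  "char_spectrum c1 c3 r2 r4 \<tau> = {z. det (charmat c1 c3 r2 r4 \<tau> z) = 0}"

end

theory Submission
  imports Defs
begin

lemma det_formula:
  "det (charmat c1 c3 r2 r4 \<tau> s) =
     (s + of_real (coef_a1 c1 c3 * r2)) *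
       (s + of_real ((coef_a1 c1 c3 - coef_a2 c1 c3) * r4) + of_real (coef_a2 c1 c3 * r4) * exp (- 2 * of_real \<tau> * s))
     - of_real (coef_a1 c1 c3 ^ 2 * r2 * r4) * exp (- 2 * of_real \<tau> * s)"
proof -
  have e: "exp (- 2 * of_real \<tau> * s) = exp (- of_real \<tau> * s) * exp (- of_real \<tau> * s)"
    by (subst exp_add[symmetric]) (simp add: algebra_simps)
  show ?thesis
    unfolding det_2 charmat_def matA_def matB_def matC_def e
    by (simp add: mat_def algebra_simps power2_eq_square)
qed

lemma key_ineq:
  fixes p q t :: real and z :: complex
  assumes p: "p > 0" and q: "q > 0" and t: "\<bar>t\<bar> < q" and x: "Re z \<ge> 0" and z: "z \<noteq> 0"
  shows "cmod (of_real (p*q) + of_real t * z) < cmod ((z + of_real p) * (z + of_real q))"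
proof -
  define x where "x = Re z"
  define y where "y = Im z"
  have x0: "x \<ge> 0" using x x_def by simp
  have L: "(cmod (of_real (p*q) + of_real t * z))^2 = (p*q + t*x)^2 + t^2*y^2"
    by (simp add: cmod_power2 x_def y_def power_mult_distrib)
  have R: "(cmod ((z + of_real p) * (z + of_real q)))^2 = ((x+p)^2 + y^2) * ((x+q)^2+y^2)"
    by (simp add: norm_mult power_mult_distrib cmod_power2 x_def y_def)
  have tx1: "t*x \<le> q*x" using t x0 by (intro mult_right_mono) auto
  have tx2: "-t*x \<le> q*x" using t x0 by (intro mult_right_mono) auto
  have a1: "\<bar>p*q + t*x\<bar> \<le> q*(p+x)" using tx1 tx2 mult_pos_pos[OF p q] x0 by (simp add: algebra_simps abs_le_iff)
  have a2: "(p*q + t*x)^2 \<le> (q*(p+x))^2"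
    using a1 by (metis abs_le_square_iff abs_of_nonneg  order_trans abs_ge_zero)
  have t2: "t^2 < q^2" using t q by (metis abs_of_pos power2_abs power_strict_mono abs_ge_zero zero_less_numeral)
  have y2: "t^2*y^2 \<le> q^2*y^2" using t2 by (intro mult_right_mono) auto
  have Apos: "(x+p)^2 + y^2 > 0" using x0 p by (smt (verit) zero_le_power2 power2_less_0 zero_less_power2)
  have "(p*q + t*x)^2 + t^2*y^2 < ((x+p)^2 + y^2) * ((x+q)^2+y^2)"
  proof (cases "x = 0")
    case True
    then have "y \<noteq> 0" using z x_def y_def complex_eqI by fastforce
    then have "t^2*y^2 < q^2*y^2" using t2 by simp
    moreover have "q^2*((x+p)^2 + y^2) \<le> ((x+p)^2 + y^2) * ((x+q)^2+y^2)"
    proof -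
      have "0 \<le> ((x+p)^2 + y^2) * y^2" by simp
      then show ?thesis using True by (simp add: algebra_simps)
    qed
    moreover have f4: "0 \<le> y^4" "0 \<le> p^2*y^2" by simp_all
    ultimately show ?thesis using a2 True by (simp add: power_mult_distrib algebra_simps) (use f4 in linarith)
  next
    case False
    then have "q^2 < (x+q)^2" using x0 q by (intro power_strict_mono) auto
    then have "q^2*((x+p)^2 + y^2) < ((x+p)^2 + y^2) * ((x+q)^2+y^2)"
      using Apos by (smt (verit) mult.commute mult_strict_left_mono zero_le_power2)
    moreover have "(q*(p+x))^2 + q^2*y^2 = q^2*((x+p)^2+y^2)" by (simp add: power2_eq_square algebra_simps)
    ultimately show ?thesis using a2 y2 by linarith
  qed
  then show ?thesis using L R by (metis power_less_imp_less_base norm_ge_zero)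
qed

theorem lemma4:
  fixes c1 c3 r2 r4 \<tau> :: real
  assumes "c1 > 0" "c3 > 0" "r2 > 0" "r4 > 0" "\<tau> > 0"
  shows "0 \<in> char_spectrum c1 c3 r2 r4 \<tau>
         \<and> deriv (\<lambda>s. det (charmat c1 c3 r2 r4 \<tau> s)) 0 \<noteq> 0
         \<and> (\<forall>z \<in> char_spectrum c1 c3 r2 r4 \<tau> - {0}. Re z < 0)"
proof -
  define a1 where "a1 = coef_a1 c1 c3"
  define a2 where "a2 = coef_a2 c1 c3"
  define d where "d = a1 - a2"
  have d: "d = 2 * pi * c3"
  proof -
    have "2*c1/(c1+c3) - (c1-c3)/(c1+c3) = 1"
      using assms by (simp add: diff_divide_distrib[symmetric])
    then show ?thesis unfolding d_def a1_def a2_def coef_a1_def coef_a2_def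
      by (metis mult.right_neutral right_diff_distrib)
  qed
  have dpos: "d > 0" using d assms by simp
  have a1pos: "a1 > 0" using assms unfolding a1_def coef_a1_def by simp
  have a1lt: "a1 < 2 * d"
  proof -
    have "a1 = 2 * d * (c1 / (c1 + c3))" using d unfolding a1_def coef_a1_def by simp
    moreover have "c1 / (c1 + c3) < 1" using assms by simp
    moreover have "2 * d * (c1 / (c1 + c3)) < 2 * d * 1"
      using dpos \<open>c1 / (c1 + c3) < 1\<close> by (intro mult_strict_left_mono) auto
    ultimately show ?thesis by simp
  qed
  have a2bd: "\<bar>a2\<bar> < d" using a1pos a1lt d_def by auto
  define p where "p = a1 * r2"
  define q where "q = d * r4"
  have ppos: "p > 0" and qpos: "q > 0" using a1pos dpos assms p_def q_def by auto
  define g where "g = (\<lambda>s::complex. (s + of_real p) * (s + of_real q + of_real (a2 * r4) * exp (- 2 * of_real \<tau> * s))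
     - of_real (a1 ^ 2 * r2 * r4) * exp (- 2 * of_real \<tau> * s))"
  have detg: "\<And>s. det (charmat c1 c3 r2 r4 \<tau> s) = g s"
    unfolding det_formula g_def p_def q_def d_def a1_def a2_def by simp
  have part1: "0 \<in> char_spectrum c1 c3 r2 r4 \<tau>"
  proof -
    have r: "p * (q + a2 * r4) - a1^2 * r2 * r4 = 0"
      unfolding p_def q_def d_def by (simp add: algebra_simps power2_eq_square)
    have "g 0 = of_real (p * (q + a2 * r4) - a1^2 * r2 * r4)"
      unfolding g_def by simp
    then show ?thesis unfolding char_spectrum_def using detg r by simp
  qed
  define D where "D = a1 * (r4 + r2 + 2 * \<tau> * r2 * r4 * d)"
  have "(g has_field_derivative of_real D) (at 0)"
  proof -
    have "(g has_field_derivative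
       (1 * (0 + of_real q + of_real (a2 * r4) * exp (- 2 * of_real \<tau> * 0))
        + (0 + of_real p) * (1 + of_real (a2 * r4) * (exp (- 2 * of_real \<tau> * 0) * (- 2 * of_real \<tau>)))
        - of_real (a1 ^ 2 * r2 * r4) * (exp (- 2 * of_real \<tau> * 0) * (- 2 * of_real \<tau>)))) (at 0)"
      unfolding g_def by (auto intro!: derivative_eq_intros)
    moreover have "(1 * (0 + of_real q + of_real (a2 * r4) * exp (- 2 * of_real \<tau> * 0))
        + (0 + of_real p) * (1 + of_real (a2 * r4) * (exp (- 2 * of_real \<tau> * 0) * (- 2 * of_real \<tau>)))
        - of_real (a1 ^ 2 * r2 * r4) * (exp (- 2 * of_real \<tau> * 0) * (- 2 * of_real \<tau>))) = (of_real D :: complex)"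
    proof -
      have r: "q + a2 * r4 + p * (1 - 2 * \<tau> * a2 * r4) + 2 * \<tau> * a1^2 * r2 * r4 = D"
        unfolding D_def p_def q_def d_def by (simp add: algebra_simps power2_eq_square)
      have "(1 * (0 + of_real q + of_real (a2 * r4) * exp (- 2 * of_real \<tau> * 0))
        + (0 + of_real p) * (1 + of_real (a2 * r4) * (exp (- 2 * of_real \<tau> * 0) * (- 2 * of_real \<tau>)))
        - of_real (a1 ^ 2 * r2 * r4) * (exp (- 2 * of_real \<tau> * 0) * (- 2 * of_real \<tau>))) =
        (of_real (q + a2 * r4 + p * (1 - 2 * \<tau> * a2 * r4) + 2 * \<tau> * a1^2 * r2 * r4) :: complex)"
        by (simp add: algebra_simps)
      then show ?thesis using r by simp
    qed
    ultimately show ?thesis by simp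
  qed
  then have "deriv g 0 = of_real D" by (rule DERIV_imp_deriv)
  moreover have "D > 0" unfolding D_def using a1pos assms dpos by (simp add: add_pos_pos)
  ultimately have part2: "deriv (\<lambda>s. det (charmat c1 c3 r2 r4 \<tau> s)) 0 \<noteq> 0"
    using detg by (simp add: fun_eq_iff)
  have part3: "Re z < 0" if "z \<in> char_spectrum c1 c3 r2 r4 \<tau> - {0}" for z
  proof (rule ccontr)
    assume "\<not> Re z < 0"
    then have x: "Re z \<ge> 0" by simp
    have z0: "z \<noteq> 0" and gz: "g z = 0" using that detg unfolding char_spectrum_def by auto
    define E where "E = exp (- 2 * of_real \<tau> * z)"
    define t where "t = - a2 * r4"
    have tb: "\<bar>t\<bar> < q" using a2bd assms unfolding t_def q_def by (simp add: abs_mult)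
    have eq: "(z + of_real p) * (z + of_real q) = E * (of_real (p*q) + of_real t * z)"
    proof -
      have "a1 ^ 2 * r2 * r4 - a2 * r4 * p = p * q"
        unfolding p_def q_def d_def by (simp add: algebra_simps power2_eq_square)
      then have h: "of_real (a1 ^ 2 * r2 * r4) - of_real (a2 * r4) * of_real p = (of_real (p*q) :: complex)"
        by (metis of_real_mult of_real_diff)
      have "(z + of_real p) * (z + of_real q) = E * (of_real (a1 ^ 2 * r2 * r4) - of_real (a2 * r4) * (z + of_real p))"
        using gz unfolding g_def E_def by (simp add: algebra_simps)
      also have "\<dots> = E * (of_real (p*q) + of_real t * z)"
        using h unfolding t_def by (simp add: algebra_simps)
      finally show ?thesis .
    qed
    have "norm E \<le> 1" unfolding E_def using x assms by simp
    then have "cmod ((z + of_real p) * (z + of_real q)) \<le> cmod (of_real (p*q) + of_real t * z)"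
      unfolding eq norm_mult by (simp add: mult_left_le_one_le)
    with key_ineq[OF ppos qpos tb x z0] show False by simp
  qed
  show ?thesis using part1 part2 part3 by blast
qed

end
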